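(* Let $A\in\mathbb{R}^{m\times n}$ have no zero row, with rows $a_1^T,\dots,a_m^T$, let ${\bf u}=(\mu_1,\dots,\mu_m)\in\mathbb{R}^m$, let $P_k(\mu_k)=I-\mu_k a_ka_k^T/\|a_k\|_2^2$, $Q_i({\bf u}_i)=P_m(\mu_m)\cdots P_{i+1}(\mu_{i+1})$ for $1\le i\le m-1$ and $Q_m({\bf u}_m)=I$. Let $h_{k,l}=a_k^Ta_l/\|a_l\|_2^2$. For $1\le i<j\le m$ define $$d_{i,j}({\bf u}_i)=\sum_{v=2}^{j-i+1}(-1)^{v-1}\sum_{i=t_1<t_2<\dots<t_v=j}\ \prod_{s=1}^{v-1}\mu_{t_{s+1}}\prod_{s=1}^{v-1}h_{t_s,t_{s+1}},$$ where the inner sum is over all strictly increasing integer sequences $t_1<\dots<t_v$ with $t_1=i$, $t_v=j$. Then for every $1\le i\le m$ and every $\tilde x\in N(A)^\perp$, $$a_i^T[Q_i({\bf u}_i)]^T\tilde x=\big(1,d_{i,i+1}({\bf u}_i),\dots,d_{i,m}({\bf u}_i)\big)\big(a_i^T,a_{i+1}^T,\dots,a_m^T\big)^T\tilde x,$$ and the compatible vector of $Q_i({\bf u}_i)a_i$ on $A$ is $(0,\dots,0,1,d_{i,i+1}({\bf u}_i),\dots,d_{i,m}({\bf u}_i))$ (with the $1$ in position $i$), i.e. $Q_i({\bf u}_i)a_i=a_i+\sum_{j=i+1}^m d_{i,j}({\bf u}_i)a_j$.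
   Context: ${\bf u}_i=(\mu_{i+1},\dots,\mu_m)$. $N(A)^\perp$ is the orthogonal complement of the null space of $A$. *)

theory Defs
  imports "HOL-Analysis.Analysis"
begin

text \<open>Rows a_1,...,a_m of A are given as a :: nat => real^'n (only indices 1..m matter);
  mu :: nat => real gives mu_1,...,mu_m.\<close>

definition Pmat :: "(nat \<Rightarrow> real^'n) \<Rightarrow> (nat \<Rightarrow> real) \<Rightarrow> nat \<Rightarrow> real^'n^'n" where
  "Pmat a mu k = mat 1 - (\<chi> r c. mu k * (a k $ r) * (a k $ c) / (norm (a k))\<^sup>2)"

text \<open>Q_i = P_m ** P_(m-1) ** ... ** P_(i+1); Q_m = I.\<close>
definition Qmat :: "(nat \<Rightarrow> real^'n) \<Rightarrow> (nat \<Rightarrow> real) \<Rightarrow> nat \<Rightarrow> nat \<Rightarrow> real^'n^'n" where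
  "Qmat a mu m i = foldl (\<lambda>M k. M ** Pmat a mu k) (mat 1) (rev [i+1..<m+1])"

definition hcoef :: "(nat \<Rightarrow> real^'n) \<Rightarrow> nat \<Rightarrow> nat \<Rightarrow> real" where
  "hcoef a k l = (a k \<bullet> a l) / (norm (a l))\<^sup>2"

definition incseqs :: "nat \<Rightarrow> nat \<Rightarrow> nat \<Rightarrow> nat list set" where
  "incseqs v i j = {ts. length ts = v \<and> sorted_wrt (<) ts \<and> ts ! 0 = i \<and> ts ! (v - 1) = j}"

definition dcoef :: "(nat \<Rightarrow> real^'n) \<Rightarrow> (nat \<Rightarrow> real) \<Rightarrow> nat \<Rightarrow> nat \<Rightarrow> real" where
  "dcoef a mu i j = (\<Sum>v = 2..j - i + 1. (-1) ^ (v - 1) *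
      (\<Sum>ts \<in> incseqs v i j.
         (\<Prod>s<v-1. mu (ts ! (s+1))) * (\<Prod>s<v-1. hcoef a (ts ! s) (ts ! (s+1)))))"

definition nullspace_rows :: "(nat \<Rightarrow> real^'n) \<Rightarrow> nat \<Rightarrow> (real^'n) set" where
  "nullspace_rows a m = {z. \<forall>k\<in>{1..m}. a k \<bullet> z = 0}"

definition orth_compl :: "(real^'n) set \<Rightarrow> (real^'n) set" where
  "orth_compl S = {x. \<forall>z\<in>S. z \<bullet> x = 0}"

end

theory Submission
  imports Defs
begin

lemma transp_inner: "(u::real^'n) \<bullet> (transpose Q *v x) = (Q *v u) \<bullet> x"
  unfolding inner_vec_def matrix_vector_mult_def
  apply (simp add: transpose_def sum_distrib_left sum_distrib_right)
  apply (subst sum.swap)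
  apply (simp add: mult_ac)
  done

lemma delta_sum: "(\<Sum>j\<in>UNIV. (w::real^'n) $ j * (if i = j then 1 else 0)) = w $ i"
  by (simp add: if_distrib[of "\<lambda>x. _ * x"] cong: if_cong)

lemma Pmat_mult: "Pmat a mu k *v w = w - (mu k * (a k \<bullet> w) / (norm (a k))\<^sup>2) *\<^sub>R a k"
  by (simp add: Pmat_def vec_eq_iff matrix_vector_mult_def mat_def inner_vec_def
      sum_subtractf sum_distrib_left sum_divide_distrib algebra_simps delta_sum)

lemma foldl_mat:
  fixes N :: "real^'n^'n"
  shows "foldl (\<lambda>M k. M ** Pmat a mu k) N xs = N ** foldl (\<lambda>M k. M ** Pmat a mu k) (mat 1) xs"
proof (induction xs arbitrary: N)
  case Nil then show ?case by (simp add: matrix_mul_rid)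
next
  case (Cons x xs)
  show ?case using Cons[of "N ** Pmat a mu x"] Cons[of "mat 1 ** Pmat a mu x"]
    by (simp add: matrix_mul_assoc matrix_mul_lid)
qed

lemma Qmat_Suc: "i \<le> m \<Longrightarrow> Qmat a mu (Suc m) i = Pmat a mu (Suc m) ** Qmat a mu m i"
proof -
  assume "i \<le> m"
  then have "rev [i+1..<Suc m+1] = Suc m # rev [i+1..<m+1]" by simp
  then show ?thesis unfolding Qmat_def
    by (simp add: foldl_mat[of a mu "Pmat a mu (Suc m)"] del: upt_Suc)
qed

lemma Qmat_self: "Qmat (a::nat \<Rightarrow> real^'n) mu m m = mat 1"
  by (simp add: Qmat_def)

definition Wt :: "(nat \<Rightarrow> real^'n) \<Rightarrow> (nat \<Rightarrow> real) \<Rightarrow> nat \<Rightarrow> nat list \<Rightarrow> real" where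
  "Wt a mu v ts = (\<Prod>s<v-1. mu (ts ! (s+1))) * (\<Prod>s<v-1. hcoef a (ts ! s) (ts ! (s+1)))"

definition pathsum :: "(nat \<Rightarrow> real^'n) \<Rightarrow> (nat \<Rightarrow> real) \<Rightarrow> nat \<Rightarrow> nat \<Rightarrow> nat \<Rightarrow> real" where
  "pathsum a mu v i j = (\<Sum>ts\<in>incseqs v i j. Wt a mu v ts)"

lemma dcoef_pathsum: "dcoef a mu i j = (\<Sum>v = 2..j - i + 1. (-1) ^ (v - 1) * pathsum a mu v i j)"
  unfolding dcoef_def pathsum_def Wt_def by simp

lemma nth_ge: "sorted_wrt (<) ts \<Longrightarrow> k < length ts \<Longrightarrow> ts!0 + k \<le> (ts!k :: nat)"
proof (induction k)
  case 0 then show ?case by simp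
next
  case (Suc k)
  then have "ts!k < ts!(Suc k)" using sorted_wrt_nth_less by fastforce
  then show ?case using Suc by simp
qed

lemma incseqs_bound: "ts \<in> incseqs v i j \<Longrightarrow> 1 \<le> v \<Longrightarrow> i + (v - 1) \<le> j"
  unfolding incseqs_def using nth_ge[of ts "v-1"] by auto

lemma incseqs_le: "ts \<in> incseqs v i j \<Longrightarrow> x \<in> set ts \<Longrightarrow> x \<le> j"
proof -
  assume A: "ts \<in> incseqs v i j" "x \<in> set ts"
  then obtain k where k: "k < length ts" "ts!k = x" by (auto simp: in_set_conv_nth)
  have "k < v - 1 \<Longrightarrow> ts!k < ts!(v-1)" using A k sorted_wrt_nth_less[of "(<)" ts k "v-1"]
    unfolding incseqs_def by auto
  moreover have "k = v - 1 \<or> k < v - 1" using A k unfolding incseqs_def by auto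
  ultimately show ?thesis using A k unfolding incseqs_def by auto
qed

lemma incseqs_finite: "finite (incseqs v i j)"
proof -
  have "incseqs v i j \<subseteq> {ts. set ts \<subseteq> {..j} \<and> length ts = v}"
    using incseqs_le unfolding incseqs_def by fastforce
  moreover have "finite {ts. set ts \<subseteq> {..j} \<and> length ts = v}"
    by (rule finite_lists_length_eq) simp
  ultimately show ?thesis by (rule finite_subset)
qed

lemma incseqs_empty: "1 \<le> v \<Longrightarrow> j - i + 1 < v \<Longrightarrow> incseqs v i j = {}"
  using incseqs_bound by fastforce

lemma pathsum_zero: "1 \<le> v \<Longrightarrow> j - i + 1 < v \<Longrightarrow> pathsum a mu v i j = 0"
  unfolding pathsum_def using incseqs_empty by simp

lemma incseqs_two: "i < j \<Longrightarrow> incseqs 2 i j = {[i,j]}"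
proof
  show "{[i, j]} \<subseteq> incseqs 2 i j" if "i < j" using that unfolding incseqs_def by auto
  show "incseqs 2 i j \<subseteq> {[i, j]}"
  proof
    fix ts assume "ts \<in> incseqs 2 i j"
    then have "length ts = 2" "ts!0 = i" "ts!1 = j" unfolding incseqs_def by auto
    then have "ts = [i,j]"
      by (cases ts; cases "tl ts"; auto)
    then show "ts \<in> {[i,j]}" by simp
  qed
qed

lemma pathsum_two: "i < j \<Longrightarrow> pathsum a mu 2 i j = mu j * hcoef a i j"
  unfolding pathsum_def Wt_def by (simp add: incseqs_two)

lemma Wt_snoc:
  assumes "length ts = v" "1 \<le> v" "ts!(v-1) = l"
  shows "Wt a mu (Suc v) (ts @ [j]) = Wt a mu v ts * (mu j * hcoef a l j)"
proof -
  obtain w where w: "v = Suc w" using assms by (cases v) auto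
  have e1: "(ts @ [j]) ! (s+1) = ts ! (s+1)" if "s < w" for s using that assms w by (simp add: nth_append)
  have e2: "(ts @ [j]) ! s = ts ! s" if "s < w" for s using that assms w by (simp add: nth_append)
  have "Wt a mu (Suc v) (ts @ [j]) =
     (\<Prod>s<Suc w. mu ((ts@[j]) ! (s+1))) * (\<Prod>s<Suc w. hcoef a ((ts@[j]) ! s) ((ts@[j]) ! (s+1)))"
    unfolding Wt_def w by simp
  also have "\<dots> = (\<Prod>s<w. mu (ts ! (s+1))) * mu j * ((\<Prod>s<w. hcoef a (ts ! s) (ts ! (s+1))) * hcoef a l j)"
    using assms w by (simp add: e1 e2 nth_append)
  finally show ?thesis unfolding Wt_def w by simp
qed

lemma incseqs_Suc:
  assumes "2 \<le> v"
  shows "incseqs (Suc v) i j = (\<lambda>ts. ts @ [j]) ` (\<Union>l\<in>{i<..<j}. incseqs v i l)"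
proof
  show "incseqs (Suc v) i j \<subseteq> (\<lambda>ts. ts @ [j]) ` (\<Union>l\<in>{i<..<j}. incseqs v i l)"
  proof
    fix ts assume A: "ts \<in> incseqs (Suc v) i j"
    then have L: "length ts = Suc v" and S: "sorted_wrt (<) ts" and F: "ts!0 = i" and La: "ts!v = j"
      unfolding incseqs_def by auto
    define ts' where "ts' = butlast ts"
    have ts: "ts = ts' @ [j]" using L La unfolding ts'_def
      by (metis append_butlast_last_id diff_Suc_1 last_conv_nth list.size(3) nat.distinct(1))
    have L': "length ts' = v" using L ts'_def by simp
    have S': "sorted_wrt (<) ts'" using S ts by (simp add: sorted_wrt_append)
    have F': "ts'!0 = i" using F ts L' assms by (simp add: nth_append)
    have lt1: "ts!0 < ts!(v-1)" using S L assms sorted_wrt_nth_less[of "(<)" ts 0 "v-1"] by auto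
    have lt2: "ts!(v-1) < ts!v" using S L assms sorted_wrt_nth_less[of "(<)" ts "v-1" v] by auto
    have eq: "ts!(v-1) = ts'!(v-1)" using ts L' assms by (simp add: nth_append)
    have "ts' \<in> incseqs v i (ts'!(v-1))" using L' S' F' unfolding incseqs_def by auto
    moreover have "ts'!(v-1) \<in> {i<..<j}" using lt1 lt2 eq F La by auto
    ultimately show "ts \<in> (\<lambda>ts. ts @ [j]) ` (\<Union>l\<in>{i<..<j}. incseqs v i l)"
      using ts by blast
  qed
  show "(\<lambda>ts. ts @ [j]) ` (\<Union>l\<in>{i<..<j}. incseqs v i l) \<subseteq> incseqs (Suc v) i j"
  proof
    fix ts assume "ts \<in> (\<lambda>ts. ts @ [j]) ` (\<Union>l\<in>{i<..<j}. incseqs v i l)"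
    then obtain ts' l where ts: "ts = ts' @ [j]" and l: "l \<in> {i<..<j}" and T: "ts' \<in> incseqs v i l"
      by blast
    have le: "\<forall>x\<in>set ts'. x < j" using incseqs_le[OF T] l by fastforce
    show "ts \<in> incseqs (Suc v) i j" using T le assms unfolding ts incseqs_def
      by (auto simp: sorted_wrt_append nth_append)
  qed
qed

lemma pathsum_Suc:
  assumes "2 \<le> v"
  shows "pathsum a mu (Suc v) i j = (\<Sum>l\<in>{i<..<j}. pathsum a mu v i l * (mu j * hcoef a l j))"
proof -
  have inj: "inj_on (\<lambda>ts. ts @ [j]) X" for X by (simp add: inj_on_def)
  have "pathsum a mu (Suc v) i j = (\<Sum>ts\<in>(\<Union>l\<in>{i<..<j}. incseqs v i l). Wt a mu (Suc v) (ts @ [j]))"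
    unfolding pathsum_def incseqs_Suc[OF assms] by (simp add: sum.reindex[OF inj])
  also have "\<dots> = (\<Sum>l\<in>{i<..<j}. \<Sum>ts\<in>incseqs v i l. Wt a mu (Suc v) (ts @ [j]))"
  proof (rule sum.UNION_disjoint)
    show "finite {i<..<j}" by simp
    show "\<forall>l\<in>{i<..<j}. finite (incseqs v i l)" by (simp add: incseqs_finite)
    show "\<forall>l\<in>{i<..<j}. \<forall>l'\<in>{i<..<j}. l \<noteq> l' \<longrightarrow> incseqs v i l \<inter> incseqs v i l' = {}"
      unfolding incseqs_def by auto
  qed
  also have "\<dots> = (\<Sum>l\<in>{i<..<j}. \<Sum>ts\<in>incseqs v i l. Wt a mu v ts * (mu j * hcoef a l j))"
    by (intro sum.cong refl Wt_snoc) (use assms in \<open>auto simp: incseqs_def\<close>)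
  finally show ?thesis unfolding pathsum_def by (simp add: sum_distrib_right)
qed

lemma dcoef_ext:
  assumes "j - i + 1 \<le> N"
  shows "dcoef a mu i j = (\<Sum>v = 2..N. (-1) ^ (v - 1) * pathsum a mu v i j)"
  unfolding dcoef_pathsum
  by (rule sum.mono_neutral_left) (use assms in \<open>auto intro!: pathsum_zero\<close>)

lemma sum_split2: "1 \<le> N \<Longrightarrow> sum g {2..Suc N} = (g 2 :: real) + (\<Sum>v = 2..N. g (Suc v))"
proof (induction N)
  case 0 then show ?case by simp
next
  case (Suc N)
  show ?case
  proof (cases "N = 0")
    case True then show ?thesis by (simp add: numeral_2_eq_2)
  next
    case False
    then have h: "sum g {2..Suc N} = g 2 + (\<Sum>v = 2..N. g (Suc v))" using Suc by simp
    have "sum g {2..Suc (Suc N)} = sum g {2..Suc N} + g (Suc (Suc N))"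
      by (rule sum.cl_ivl_Suc[THEN trans]) simp
    moreover have "(\<Sum>v = 2..Suc N. g (Suc v)) = (\<Sum>v = 2..N. g (Suc v)) + g (Suc (Suc N))"
      using False by (rule_tac sum.cl_ivl_Suc[THEN trans]) simp
    ultimately show ?thesis using h by simp
  qed
qed

lemma dcoef_rec:
  assumes "i < j"
  shows "dcoef a mu i j = - mu j * (hcoef a i j + (\<Sum>l\<in>{i<..<j}. dcoef a mu i l * hcoef a l j))"
proof -
  define N where "N = j - i"
  have N1: "1 \<le> N" using assms N_def by simp
  have "dcoef a mu i j = (\<Sum>v = 2..Suc N. (-1) ^ (v - 1) * pathsum a mu v i j)"
    unfolding dcoef_pathsum N_def by simp
  also have "\<dots> = - pathsum a mu 2 i j + (\<Sum>v = 2..N. (-1) ^ v * pathsum a mu (Suc v) i j)"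
    using sum_split2[OF N1, of "\<lambda>v. (-1)^(v-1) * pathsum a mu v i j"] by simp
  also have "(\<Sum>v = 2..N. (-1) ^ v * pathsum a mu (Suc v) i j)
     = (\<Sum>v = 2..N. \<Sum>l\<in>{i<..<j}. (-1) ^ v * pathsum a mu v i l * (mu j * hcoef a l j))"
    by (intro sum.cong refl) (simp add: pathsum_Suc sum_distrib_left mult.assoc)
  also have "\<dots> = (\<Sum>l\<in>{i<..<j}. \<Sum>v = 2..N. (-1) ^ v * pathsum a mu v i l * (mu j * hcoef a l j))"
    by (rule sum.swap)
  also have "\<dots> = (\<Sum>l\<in>{i<..<j}. - (mu j * hcoef a l j) * dcoef a mu i l)"
  proof (intro sum.cong refl)
    fix l assume l: "l \<in> {i<..<j}"
    have "dcoef a mu i l = (\<Sum>v = 2..N. (-1) ^ (v - 1) * pathsum a mu v i l)"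
      by (rule dcoef_ext) (use l N_def in auto)
    moreover have "(-1::real) ^ v = - ((-1) ^ (v - 1))" if "2 \<le> v" for v
      using that by (cases v) auto
    ultimately show "(\<Sum>v = 2..N. (-1) ^ v * pathsum a mu v i l * (mu j * hcoef a l j))
        = - (mu j * hcoef a l j) * dcoef a mu i l"
      by (simp add: sum_distrib_left sum_distrib_right mult_ac sum_negf[symmetric])
  qed
  finally show ?thesis using assms
    by (simp add: pathsum_two sum_distrib_left algebra_simps sum_negf)
qed

lemma Q_main:
  "i \<le> m \<Longrightarrow> Qmat a mu m i *v a i = a i + (\<Sum>j = i+1..m. dcoef a mu i j *\<^sub>R a j)"
proof (induction m)
  case 0 then show ?case by (simp add: Qmat_self)
next
  case (Suc m)
  show ?case
  proof (cases "i = Suc m")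
    case True then show ?thesis by (simp add: Qmat_self)
  next
    case False
    then have im: "i \<le> m" using Suc by simp
    define w where "w = a i + (\<Sum>j = i+1..m. dcoef a mu i j *\<^sub>R a j)"
    define k where "k = Suc m"
    have "Qmat a mu (Suc m) i *v a i = Pmat a mu k *v w"
      using Suc.IH[OF im] im by (simp add: Qmat_Suc matrix_vector_mul_assoc[symmetric] w_def k_def)
    also have "\<dots> = w - (mu k * (a k \<bullet> w) / (norm (a k))\<^sup>2) *\<^sub>R a k" by (rule Pmat_mult)
    moreover have hk: "(a k \<bullet> w) / (norm (a k))\<^sup>2 = hcoef a i k + (\<Sum>l\<in>{i<..<k}. dcoef a mu i l * hcoef a l k)"
    proof -
      have "{i<..<k} = {i+1..m}" unfolding k_def by auto
      then show ?thesis unfolding w_def hcoef_def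
        by (simp add: inner_add_right inner_sum_right add_divide_distrib sum_divide_distrib inner_commute)
    qed
    ultimately have "Qmat a mu (Suc m) i *v a i = w - (mu k * (hcoef a i k + (\<Sum>l\<in>{i<..<k}. dcoef a mu i l * hcoef a l k))) *\<^sub>R a k"
      by (metis times_divide_eq_right)
    then have "Qmat a mu (Suc m) i *v a i = w + dcoef a mu i k *\<^sub>R a k"
      using dcoef_rec[of i k a mu] im k_def by simp
    then show ?thesis using im unfolding w_def k_def by (simp add: add.assoc)
  qed
qed

theorem lemma3p7:
  fixes a :: "nat \<Rightarrow> real^'n" and mu :: "nat \<Rightarrow> real" and m :: nat
  assumes nozero: "\<forall>k\<in>{1..m}. a k \<noteq> 0"
  shows "\<forall>i\<in>{1..m}.
     (\<forall>x\<in>orth_compl (nullspace_rows a m).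
        a i \<bullet> (transpose (Qmat a mu m i) *v x)
          = a i \<bullet> x + (\<Sum>j = i+1..m. dcoef a mu i j * (a j \<bullet> x)))
     \<and> Qmat a mu m i *v a i = a i + (\<Sum>j = i+1..m. dcoef a mu i j *\<^sub>R a j)"
proof
  fix i assume i: "i \<in> {1..m}"
  then have Q: "Qmat a mu m i *v a i = a i + (\<Sum>j = i+1..m. dcoef a mu i j *\<^sub>R a j)"
    by (simp add: Q_main)
  show "(\<forall>x\<in>orth_compl (nullspace_rows a m).
        a i \<bullet> (transpose (Qmat a mu m i) *v x)
          = a i \<bullet> x + (\<Sum>j = i+1..m. dcoef a mu i j * (a j \<bullet> x)))
     \<and> Qmat a mu m i *v a i = a i + (\<Sum>j = i+1..m. dcoef a mu i j *\<^sub>R a j)"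
    unfolding transp_inner using Q by (simp add: inner_add_left inner_sum_left)
qed

end
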